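(* Let $K$ be a division ring, $G$ a group, and suppose $a,b\in K[G]$, each of rank $\ge2$, satisfy $ab=1$. Then there is a subgroup $H$ of $G$ such that, letting $c=E^G_H(a)$ and $d=E^G_H(b)$: (i) $cd=1$; (ii) the ranks of $c$ and $d$ are both $\ge2$; (iii) the support of $c$ generates $H$; (iv) the support of $d$ generates $H$. Furthermore, if also $dc=1$, then $a=c$ and $b=d$.
   Context: $K[G]$ is the group ring; the support of an element is the set of group elements with nonzero coefficient and its rank is the cardinality of the support. For a subgroup $H\le G$, $E^G_H:K[G]\to K[H]$ is the $K$-linear map with $E^G_H(g)=g$ for $g\in H$ and $E^G_H(g)=0$ for $g\in G\setminus H$. *)

theory Defs
  imports "HOL-Algebra.Generated_Groups"
begin

text \<open>Elements of the group ring K[G] are finitely supported functions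
  from the carrier of G to K (zero outside the carrier).\<close>

definition gr_supp :: "('g \<Rightarrow> 'k::zero) \<Rightarrow> 'g set" where
  "gr_supp a = {g. a g \<noteq> 0}"

definition gr_rank :: "('g \<Rightarrow> 'k::zero) \<Rightarrow> nat" where
  "gr_rank a = card (gr_supp a)"

definition group_ring :: "('g, 'b) monoid_scheme \<Rightarrow> ('g \<Rightarrow> 'k::zero) set" where
  "group_ring G = {a. finite (gr_supp a) \<and> gr_supp a \<subseteq> carrier G}"

definition gr_mult :: "('g, 'b) monoid_scheme \<Rightarrow> ('g \<Rightarrow> 'k::semiring_0) \<Rightarrow> ('g \<Rightarrow> 'k) \<Rightarrow> ('g \<Rightarrow> 'k)" where
  "gr_mult G a b = (\<lambda>x. if x \<in> carrier G
      then (\<Sum>y\<in>gr_supp a. a y * b (inv\<^bsub>G\<^esub> y \<otimes>\<^bsub>G\<^esub> x)) else 0)"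

definition gr_one :: "('g, 'b) monoid_scheme \<Rightarrow> ('g \<Rightarrow> 'k::{zero,one})" where
  "gr_one G = (\<lambda>x. if x = \<one>\<^bsub>G\<^esub> then 1 else 0)"

definition gr_proj :: "'g set \<Rightarrow> ('g \<Rightarrow> 'k::zero) \<Rightarrow> ('g \<Rightarrow> 'k)" where
  "gr_proj H a = (\<lambda>g. if g \<in> H then a g else 0)"

end

theory Submission
  imports Defs
begin

context group begin

lemma sub_mem:
  assumes H: "subgroup H G" and u: "u \<in> carrier G" and v: "v \<in> H"
  shows "(u \<otimes> v \<in> H \<longleftrightarrow> u \<in> H)" "(v \<otimes> u \<in> H \<longleftrightarrow> u \<in> H)"
   "(inv u \<in> H \<longleftrightarrow> u \<in> H)"
proof -
  have vc: "v \<in> carrier G" using H v subgroup.subset by blast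
  have iv: "inv v \<in> H" using subgroup.m_inv_closed[OF H v] .
  show "(u \<otimes> v \<in> H \<longleftrightarrow> u \<in> H)"
  proof
    assume "u \<otimes> v \<in> H"
    then have "u \<otimes> v \<otimes> inv v \<in> H" using subgroup.m_closed[OF H _ iv] by blast
    moreover have "u \<otimes> v \<otimes> inv v = u" using u vc by (simp add: m_assoc)
    ultimately show "u \<in> H" by simp
  next
    assume "u \<in> H" then show "u \<otimes> v \<in> H" using subgroup.m_closed[OF H _ v] by blast
  qed
  show "(v \<otimes> u \<in> H \<longleftrightarrow> u \<in> H)"
  proof
    assume "v \<otimes> u \<in> H"
    then have "inv v \<otimes> (v \<otimes> u) \<in> H" using subgroup.m_closed[OF H iv] by blast
    moreover have "inv v \<otimes> (v \<otimes> u) = u" using u vc by (simp add: m_assoc[symmetric])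
    ultimately show "u \<in> H" by simp
  next
    assume "u \<in> H" then show "v \<otimes> u \<in> H" using subgroup.m_closed[OF H v] by blast
  qed
  show "(inv u \<in> H \<longleftrightarrow> u \<in> H)"
  proof
    assume "inv u \<in> H" then have "inv (inv u) \<in> H" by (rule subgroup.m_inv_closed[OF H])
    then show "u \<in> H" using u by simp
  qed (rule subgroup.m_inv_closed[OF H])
qed

lemma supp_mult_sum:
  assumes "finite A" "gr_supp a \<subseteq> A" "x \<in> carrier G"
  shows "gr_mult G a b x = (\<Sum>y\<in>A. a y * b (inv y \<otimes> x))"
  unfolding gr_mult_def using assms
  by (auto intro!: sum.mono_neutral_left simp: gr_supp_def)

lemma mult_out: "x \<notin> carrier G \<Longrightarrow> gr_mult G a b x = 0"
  unfolding gr_mult_def by simp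

lemma gr_ring_out: "a \<in> group_ring G \<Longrightarrow> x \<notin> carrier G \<Longrightarrow> a x = 0"
  unfolding group_ring_def gr_supp_def by auto

lemma proj_ring: "a \<in> group_ring G \<Longrightarrow> gr_proj H a \<in> group_ring G"
  unfolding group_ring_def gr_supp_def gr_proj_def
  by (auto elim!: rev_finite_subset)

lemma supp_proj: "gr_supp (gr_proj H a) = gr_supp a \<inter> H"
  unfolding gr_supp_def gr_proj_def by auto

lemma proj_proj: "H' \<subseteq> H \<Longrightarrow> gr_proj H' (gr_proj H a) = gr_proj H' a"
  unfolding gr_proj_def by (rule ext) auto

lemma proj_id: "gr_supp a \<subseteq> H \<Longrightarrow> gr_proj H a = a"
  unfolding gr_proj_def gr_supp_def by (rule ext) auto

lemma proj_one: "\<one> \<in> H \<Longrightarrow> gr_proj H (gr_one G) = gr_one G"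
  unfolding gr_proj_def gr_one_def by auto

lemma projL:
  assumes H: "subgroup H G" and c: "c \<in> group_ring G" "gr_supp c \<subseteq> H"
  shows "gr_proj H (gr_mult G c b) = gr_mult G c (gr_proj H b)"
proof
  fix x
  have Hc: "H \<subseteq> carrier G" using H subgroup.subset by blast
  have sc: "y \<in> gr_supp c \<Longrightarrow> y \<in> carrier G" for y using c Hc by auto
  show "gr_proj H (gr_mult G c b) x = gr_mult G c (gr_proj H b) x"
  proof (cases "x \<in> carrier G")
    case False then show ?thesis using Hc by (auto simp: gr_proj_def mult_out)
  next
    case True
    show ?thesis
    proof (cases "x \<in> H")
      case xH: True
      have "y \<in> gr_supp c \<Longrightarrow> inv y \<otimes> x \<in> H" for y
      proof -
        assume "y \<in> gr_supp c"
        then have "inv y \<in> H" using c(2) subgroup.m_inv_closed[OF H] by blast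
        then show ?thesis using subgroup.m_closed[OF H _ xH] by blast
      qed
      then show ?thesis using xH True unfolding gr_mult_def gr_proj_def
        by (auto intro!: sum.cong)
    next
      case xH: False
      have "y \<in> gr_supp c \<Longrightarrow> inv y \<otimes> x \<notin> H" for y
      proof -
        assume y: "y \<in> gr_supp c"
        then have "inv y \<in> H" using c(2) subgroup.m_inv_closed[OF H] by blast
        then show ?thesis using sub_mem(2)[OF H True] xH by blast
      qed
      then show ?thesis using xH True unfolding gr_mult_def gr_proj_def
        by (auto intro!: sum.neutral)
    qed
  qed
qed

lemma projR:
  assumes H: "subgroup H G" and a: "a \<in> group_ring G" and d: "gr_supp d \<subseteq> H"
  shows "gr_proj H (gr_mult G a d) = gr_mult G (gr_proj H a) d"
proof
  fix x
  have Hc: "H \<subseteq> carrier G" using H subgroup.subset by blast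
  have fa: "finite (gr_supp a)" and sa: "y \<in> gr_supp a \<Longrightarrow> y \<in> carrier G" for y
    using a unfolding group_ring_def by auto
  have spa: "gr_supp (gr_proj H a) \<subseteq> gr_supp a" by (simp add: supp_proj)
  have dz: "z \<notin> H \<Longrightarrow> d z = 0" for z using d unfolding gr_supp_def by auto
  show "gr_proj H (gr_mult G a d) x = gr_mult G (gr_proj H a) d x"
  proof (cases "x \<in> carrier G")
    case False then show ?thesis using Hc by (auto simp: gr_proj_def mult_out)
  next
    case True
    have R: "gr_mult G (gr_proj H a) d x = (\<Sum>y\<in>gr_supp a. gr_proj H a y * d (inv y \<otimes> x))"
      by (rule supp_mult_sum[OF fa spa True])
    show ?thesis
    proof (cases "x \<in> H")
      case xH: True
      have "y \<in> gr_supp a \<Longrightarrow> a y * d (inv y \<otimes> x) = gr_proj H a y * d (inv y \<otimes> x)" for y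
      proof (cases "y \<in> H")
        case False
        assume "y \<in> gr_supp a"
        then have "y \<in> carrier G" by (rule sa)
        then have "inv y \<otimes> x \<notin> H"
          using sub_mem(1)[OF H inv_closed[OF \<open>y \<in> carrier G\<close>] xH] sub_mem(3)[OF H \<open>y \<in> carrier G\<close> xH] False
          by blast
        then show ?thesis using dz by simp
      qed (simp add: gr_proj_def)
      then show ?thesis using xH True R unfolding gr_mult_def gr_proj_def
        by (auto intro!: sum.cong)
    next
      case xH: False
      have "y \<in> gr_supp a \<Longrightarrow> gr_proj H a y * d (inv y \<otimes> x) = 0" for y
      proof (cases "y \<in> H")
        case True
        assume "y \<in> gr_supp a"
        then have "y \<in> carrier G" by (rule sa)
        have "inv y \<in> H" using subgroup.m_inv_closed[OF H True] .
        then have "inv y \<otimes> x \<notin> H" using sub_mem(2)[OF H \<open>x \<in> carrier G\<close>] xH by blast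
        then show ?thesis using dz by simp
      qed (simp add: gr_proj_def)
      then show ?thesis using xH True R unfolding gr_proj_def
        by (auto intro!: sum.neutral)
    qed
  qed
qed


lemma supp_one: "gr_supp (gr_one G :: 'a \<Rightarrow> 'k::division_ring) = {\<one>}"
  unfolding gr_supp_def gr_one_def by auto

lemma one_ring: "(gr_one G :: 'a \<Rightarrow> 'k::division_ring) \<in> group_ring G"
  unfolding group_ring_def by (simp add: supp_one)

lemma mult_one_left:
  assumes "d \<in> group_ring G"
  shows "gr_mult G (gr_one G) d = (d :: 'a \<Rightarrow> 'k::division_ring)"
proof
  fix x show "gr_mult G (gr_one G) d x = d x"
    using assms unfolding gr_mult_def supp_one
    by (cases "x \<in> carrier G") (auto simp: gr_one_def gr_ring_out)
qed

lemma mult_one_right: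
  assumes "a \<in> group_ring G"
  shows "gr_mult G a (gr_one G) = (a :: 'a \<Rightarrow> 'k::division_ring)"
proof
  fix x show "gr_mult G a (gr_one G) x = a x"
  proof (cases "x \<in> carrier G")
    case True
    have fa: "finite (gr_supp a)" and sa: "gr_supp a \<subseteq> carrier G"
      using assms unfolding group_ring_def by auto
    have e: "y \<in> carrier G \<Longrightarrow> (inv y \<otimes> x = \<one>) = (y = x)" for y
    proof
      assume "y \<in> carrier G" "inv y \<otimes> x = \<one>"
      then have "y \<otimes> (inv y \<otimes> x) = y" by simp
      then show "y = x" using \<open>y \<in> carrier G\<close> True by (simp add: m_assoc[symmetric])
    qed (use True in simp)
    have "gr_mult G a (gr_one G) x = (\<Sum>y\<in>gr_supp a. if y = x then a y else 0)"
      unfolding gr_mult_def gr_one_def using True sa e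
      by (auto intro!: sum.cong)
    also have "\<dots> = a x" using fa by (auto simp: gr_supp_def)
    finally show ?thesis .
  qed (use assms in \<open>auto simp: mult_out gr_ring_out\<close>)
qed

lemma mult_zero_rank:
  assumes "gr_mult G c d = (gr_one G :: 'a \<Rightarrow> 'k::division_ring)"
  shows "gr_supp c \<noteq> {}" "gr_supp d \<noteq> {}"
proof -
  have "gr_mult G c d \<one> = gr_one G \<one>" using assms by simp
  then have s: "(\<Sum>y\<in>gr_supp c. c y * d (inv y \<otimes> \<one>)) = 1"
    by (simp add: gr_mult_def gr_one_def)
  show "gr_supp c \<noteq> {}"
  proof
    assume "gr_supp c = {}" then show False using s by simp
  qed
  show "gr_supp d \<noteq> {}"
  proof
    assume "gr_supp d = {}" then have "\<And>z. d z = 0" by (auto simp: gr_supp_def)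
    then show False using s by simp
  qed
qed

lemma rank_d:
  assumes c: "c \<in> group_ring G" and d: "d \<in> group_ring G"
    and m: "gr_mult G c d = (gr_one G :: 'a \<Rightarrow> 'k::division_ring)"
    and r: "gr_rank d \<le> 1"
  shows "gr_rank c \<le> 1"
proof -
  have fd: "finite (gr_supp d)" and sd: "gr_supp d \<subseteq> carrier G"
    using d unfolding group_ring_def by auto
  have fc: "finite (gr_supp c)" and sc: "gr_supp c \<subseteq> carrier G"
    using c unfolding group_ring_def by auto
  have "card (gr_supp d) \<noteq> 0" using mult_zero_rank(2)[OF m] fd by simp
  then have "card (gr_supp d) = 1" using r unfolding gr_rank_def by linarith
  then obtain h where h: "gr_supp d = {h}" by (rule card_1_singletonE)
  have hc: "h \<in> carrier G" using h sd by auto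
  have "gr_supp c \<subseteq> {inv h}"
  proof
    fix y assume y: "y \<in> gr_supp c"
    have yc: "y \<in> carrier G" using y sc by auto
    let ?x = "y \<otimes> h"
    have xc: "?x \<in> carrier G" using yc hc by simp
    have "gr_mult G c d ?x = (\<Sum>z\<in>gr_supp c. c z * d (inv z \<otimes> ?x))"
      using xc by (simp add: gr_mult_def)
    also have "\<dots> = c y * d h"
    proof (subst sum.remove[OF fc y])
      have "z \<in> gr_supp c - {y} \<Longrightarrow> d (inv z \<otimes> ?x) = 0" for z
      proof -
        assume z: "z \<in> gr_supp c - {y}"
        then have zc: "z \<in> carrier G" using sc by auto
        have "inv z \<otimes> ?x \<noteq> h"
        proof
          assume "inv z \<otimes> ?x = h"
          then have "z \<otimes> (inv z \<otimes> ?x) = z \<otimes> h" by simp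
          then have "?x = z \<otimes> h" using zc xc by (simp add: m_assoc[symmetric])
          then have "y = z" using yc zc hc by simp
          then show False using z by auto
        qed
        then show ?thesis using h by (auto simp: gr_supp_def)
      qed
      then show "c y * d (inv y \<otimes> ?x) + (\<Sum>z\<in>gr_supp c - {y}. c z * d (inv z \<otimes> ?x)) = c y * d h"
        using yc hc by (simp add: m_assoc[symmetric])
    qed
    finally have "gr_mult G c d ?x = c y * d h" .
    moreover have "c y * d h \<noteq> 0" using y h by (auto simp: gr_supp_def)
    ultimately have "?x = \<one>" using m by (auto simp: gr_one_def split: if_splits)
    then show "y \<in> {inv h}" using yc hc by (simp add: inv_equality)
  qed
  then have "card (gr_supp c) \<le> card {inv h}" by (rule card_mono[rotated]) simp
  then show ?thesis unfolding gr_rank_def by simp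
qed

lemma rank_c:
  assumes c: "c \<in> group_ring G" and d: "d \<in> group_ring G"
    and m: "gr_mult G c d = (gr_one G :: 'a \<Rightarrow> 'k::division_ring)"
    and r: "gr_rank c \<le> 1"
  shows "gr_rank d \<le> 1"
proof -
  have fd: "finite (gr_supp d)" and sd: "gr_supp d \<subseteq> carrier G"
    using d unfolding group_ring_def by auto
  have fc: "finite (gr_supp c)" and sc: "gr_supp c \<subseteq> carrier G"
    using c unfolding group_ring_def by auto
  have "card (gr_supp c) \<noteq> 0" using mult_zero_rank(1)[OF m] fc by simp
  then have "card (gr_supp c) = 1" using r unfolding gr_rank_def by linarith
  then obtain g where g: "gr_supp c = {g}" by (rule card_1_singletonE)
  have gc: "g \<in> carrier G" using g sc by auto
  have "gr_supp d \<subseteq> {inv g}"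
  proof
    fix y assume y: "y \<in> gr_supp d"
    have yc: "y \<in> carrier G" using y sd by auto
    let ?x = "g \<otimes> y"
    have xc: "?x \<in> carrier G" using yc gc by simp
    have "gr_mult G c d ?x = c g * d y"
      using xc yc gc by (simp add: gr_mult_def g m_assoc[symmetric])
    moreover have "c g * d y \<noteq> 0" using y g by (auto simp: gr_supp_def)
    ultimately have "?x = \<one>" using m by (auto simp: gr_one_def split: if_splits)
    then have "y \<otimes> g = \<one>" using yc gc inv_comm by blast
    then have "inv g = y" using yc gc inv_equality by blast
    then show "y \<in> {inv g}" by simp
  qed
  then have "card (gr_supp d) \<le> card {inv g}" by (rule card_mono[rotated]) simp
  then show ?thesis unfolding gr_rank_def by simp
qed


lemma mult_assoc:
  assumes a: "a \<in> group_ring G" and b: "b \<in> group_ring G" and c: "c \<in> group_ring G"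
  shows "gr_mult G (gr_mult G a b) c = gr_mult G a (gr_mult G b (c :: 'a \<Rightarrow> 'k::division_ring))"
proof
  fix x
  have fa: "finite (gr_supp a)" and sa: "gr_supp a \<subseteq> carrier G"
    using a unfolding group_ring_def by auto
  have fb: "finite (gr_supp b)" and sb: "gr_supp b \<subseteq> carrier G"
    using b unfolding group_ring_def by auto
  define Z where "Z = (\<lambda>(y,w). y \<otimes> w) ` (gr_supp a \<times> gr_supp b)"
  have fZ: "finite Z" unfolding Z_def using fa fb by simp
  have Zc: "Z \<subseteq> carrier G" unfolding Z_def using sa sb by auto
  have sZ: "gr_supp (gr_mult G a b) \<subseteq> Z"
  proof
    fix z assume z: "z \<in> gr_supp (gr_mult G a b)"
    have zc: "z \<in> carrier G"
    proof (rule ccontr)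
      assume "z \<notin> carrier G" then have "gr_mult G a b z = 0" by (rule mult_out)
      with z show False by (simp add: gr_supp_def)
    qed
    have "(\<Sum>y\<in>gr_supp a. a y * b (inv y \<otimes> z)) \<noteq> 0"
    proof -
      have "gr_mult G a b z \<noteq> 0" using z by (simp add: gr_supp_def)
      then show ?thesis using zc by (simp add: gr_mult_def)
    qed
    then obtain y where y0: "y \<in> gr_supp a" "a y * b (inv y \<otimes> z) \<noteq> 0"
      using sum.not_neutral_contains_not_neutral by blast
    then have y: "y \<in> gr_supp a" "b (inv y \<otimes> z) \<noteq> 0" by auto
    have yc: "y \<in> carrier G" using y sa by auto
    have "z = y \<otimes> (inv y \<otimes> z)" using yc zc by (simp add: m_assoc[symmetric])
    then show "z \<in> Z" unfolding Z_def using y by (force simp: gr_supp_def)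
  qed
  show "gr_mult G (gr_mult G a b) c x = gr_mult G a (gr_mult G b c) x"
  proof (cases "x \<in> carrier G")
    case False then show ?thesis by (simp add: mult_out)
  next
    case xc: True
    have "gr_mult G (gr_mult G a b) c x = (\<Sum>z\<in>Z. gr_mult G a b z * c (inv z \<otimes> x))"
      by (rule supp_mult_sum[OF fZ sZ xc])
    also have "\<dots> = (\<Sum>z\<in>Z. (\<Sum>y\<in>gr_supp a. a y * b (inv y \<otimes> z)) * c (inv z \<otimes> x))"
      using Zc by (intro sum.cong) (auto simp: gr_mult_def)
    also have "\<dots> = (\<Sum>z\<in>Z. \<Sum>y\<in>gr_supp a. a y * (b (inv y \<otimes> z) * c (inv z \<otimes> x)))"
      by (simp add: sum_distrib_right mult.assoc)
    also have "\<dots> = (\<Sum>y\<in>gr_supp a. \<Sum>z\<in>Z. a y * (b (inv y \<otimes> z) * c (inv z \<otimes> x)))"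
      by (rule sum.swap)
    also have "\<dots> = (\<Sum>y\<in>gr_supp a. a y * (\<Sum>z\<in>Z. b (inv y \<otimes> z) * c (inv z \<otimes> x)))"
      by (simp add: sum_distrib_left)
    also have "\<dots> = (\<Sum>y\<in>gr_supp a. a y * gr_mult G b c (inv y \<otimes> x))"
    proof (rule sum.cong[OF refl])
      fix y assume y: "y \<in> gr_supp a"
      have yc: "y \<in> carrier G" using y sa by auto
      have sub: "(\<otimes>) y ` gr_supp b \<subseteq> Z" unfolding Z_def using y by auto
      have "(\<Sum>z\<in>Z. b (inv y \<otimes> z) * c (inv z \<otimes> x)) =
            (\<Sum>z\<in>(\<otimes>) y ` gr_supp b. b (inv y \<otimes> z) * c (inv z \<otimes> x))"
      proof (rule sum.mono_neutral_right[OF fZ sub], rule ballI)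
        fix z assume z: "z \<in> Z - (\<otimes>) y ` gr_supp b"
        have zc: "z \<in> carrier G" using z Zc by auto
        have "z = y \<otimes> (inv y \<otimes> z)" using yc zc by (simp add: m_assoc[symmetric])
        then have "inv y \<otimes> z \<notin> gr_supp b"
        proof -
          assume e: "z = y \<otimes> (inv y \<otimes> z)"
          show ?thesis
          proof
            assume "inv y \<otimes> z \<in> gr_supp b"
            then have "y \<otimes> (inv y \<otimes> z) \<in> (\<otimes>) y ` gr_supp b" by (rule imageI)
            then show False using z e by simp
          qed
        qed
        then show "b (inv y \<otimes> z) * c (inv z \<otimes> x) = 0" by (simp add: gr_supp_def)
      qed
      also have "\<dots> = (\<Sum>w\<in>gr_supp b. b (inv y \<otimes> (y \<otimes> w)) * c (inv (y \<otimes> w) \<otimes> x))"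
      proof (rule sum.reindex[unfolded comp_def])
        show "inj_on ((\<otimes>) y) (gr_supp b)"
        proof (rule inj_onI)
          fix u w assume u: "u \<in> gr_supp b" and w: "w \<in> gr_supp b" and eq: "y \<otimes> u = y \<otimes> w"
          then have "inv y \<otimes> (y \<otimes> u) = inv y \<otimes> (y \<otimes> w)" by simp
          moreover have "u \<in> carrier G" "w \<in> carrier G" using u w sb by auto
          ultimately show "u = w" using yc by (simp add: m_assoc[symmetric])
        qed
      qed
      also have "\<dots> = (\<Sum>w\<in>gr_supp b. b w * c (inv w \<otimes> (inv y \<otimes> x)))"
        using yc sb xc by (intro sum.cong) (auto simp: m_assoc[symmetric] inv_mult_group)
      also have "\<dots> = gr_mult G b c (inv y \<otimes> x)"
        using yc xc by (simp add: gr_mult_def)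
      finally show "a y * (\<Sum>z\<in>Z. b (inv y \<otimes> z) * c (inv z \<otimes> x)) = a y * gr_mult G b c (inv y \<otimes> x)"
        by simp
    qed
    also have "\<dots> = gr_mult G a (gr_mult G b c) x" using xc by (simp add: gr_mult_def)
    finally show ?thesis .
  qed
qed

end

theorem proposition2p3:
  fixes G :: "('g, 'b) monoid_scheme" and a b :: "'g \<Rightarrow> 'k::division_ring"
  assumes "group G"
    and "a \<in> group_ring G" and "b \<in> group_ring G"
    and "gr_rank a \<ge> 2" and "gr_rank b \<ge> 2"
    and "gr_mult G a b = gr_one G"
  shows "\<exists>H. subgroup H G \<and>
    (let c = gr_proj H a; d = gr_proj H b in
       gr_mult G c d = gr_one G \<and>
       gr_rank c \<ge> 2 \<and> gr_rank d \<ge> 2 \<and>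
       generate G (gr_supp c) = H \<and>
       generate G (gr_supp d) = H \<and>
       (gr_mult G d c = gr_one G \<longrightarrow> a = c \<and> b = d))"
proof -
  interpret group G by fact
  note aR = assms(2) and bR = assms(3)
  define P where "P H \<longleftrightarrow> subgroup H G \<and>
      gr_mult G (gr_proj H a) (gr_proj H b) = gr_one G \<and>
      2 \<le> gr_rank (gr_proj H a) \<and> 2 \<le> gr_rank (gr_proj H b) \<and>
      (gr_mult G (gr_proj H b) (gr_proj H a) = gr_one G \<longrightarrow> a = gr_proj H a \<and> b = gr_proj H b)"
    for H
  define m where "m H = gr_rank (gr_proj H a) + gr_rank (gr_proj H b)" for H
  have sa: "gr_supp a \<subseteq> carrier G" and sb: "gr_supp b \<subseteq> carrier G"
    using aR bR unfolding group_ring_def by auto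
  have fa: "finite (gr_supp a)" and fb: "finite (gr_supp b)"
    using aR bR unfolding group_ring_def by auto
  have "P (carrier G)" unfolding P_def
    using assms proj_id[OF sa] proj_id[OF sb] subgroup_self by simp
  then obtain H where PH: "P H" and Hmin: "\<And>H'. P H' \<Longrightarrow> m H \<le> m H'"
    using ex_has_least_nat[of P "carrier G" m] by blast
  define c where "c = gr_proj H a"
  define d where "d = gr_proj H b"
  have HG: "subgroup H G" and cd: "gr_mult G c d = gr_one G"
    and rc: "2 \<le> gr_rank c" and rd: "2 \<le> gr_rank d"
    and fin: "gr_mult G d c = gr_one G \<Longrightarrow> a = c \<and> b = d"
    using PH unfolding P_def c_def d_def by auto
  have cR: "c \<in> group_ring G" and dR: "d \<in> group_ring G"
    unfolding c_def d_def using aR bR proj_ring by auto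
  have sc: "gr_supp c \<subseteq> H" and sd: "gr_supp d \<subseteq> H"
    unfolding c_def d_def supp_proj by auto
  have Hc: "H \<subseteq> carrier G" using HG subgroup.subset by blast
  have fc: "finite (gr_supp c)" and fd: "finite (gr_supp d)"
    using cR dR unfolding group_ring_def by auto
  define H1 where "H1 = generate G (gr_supp c)"
  define H2 where "H2 = generate G (gr_supp d)"
  have scG: "gr_supp c \<subseteq> carrier G" using sc Hc by (rule order_trans)
  have sdG: "gr_supp d \<subseteq> carrier G" using sd Hc by (rule order_trans)
  have H1G: "subgroup H1 G" unfolding H1_def by (rule generate_is_subgroup[OF scG])
  have H2G: "subgroup H2 G" unfolding H2_def by (rule generate_is_subgroup[OF sdG])
  have H1H: "H1 \<subseteq> H" unfolding H1_def by (rule generate_subgroup_incl[OF sc HG])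
  have H2H: "H2 \<subseteq> H" unfolding H2_def by (rule generate_subgroup_incl[OF sd HG])
  have cH1: "gr_supp c \<subseteq> H1" unfolding H1_def by (auto intro: generate.incl)
  have dH2: "gr_supp d \<subseteq> H2" unfolding H2_def by (auto intro: generate.incl)
  have one1: "\<one>\<^bsub>G\<^esub> \<in> H1" by (rule subgroup.one_closed[OF H1G])
  have one2: "\<one>\<^bsub>G\<^esub> \<in> H2" by (rule subgroup.one_closed[OF H2G])
  have dH1: "gr_supp d \<subseteq> H1"
  proof -
    define d1 where "d1 = gr_proj H1 d"
    have pa: "gr_proj H1 a = c" using proj_proj[OF H1H, of a] proj_id[OF cH1] c_def by simp
    have pb: "gr_proj H1 b = d1" using proj_proj[OF H1H, of b] d1_def d_def by simp
    have d1R: "d1 \<in> group_ring G" unfolding d1_def using dR proj_ring by auto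
    have cd1: "gr_mult G c d1 = gr_one G"
      unfolding d1_def projL[OF H1G cR cH1, symmetric] cd by (rule proj_one[OF one1])
    have rd1: "2 \<le> gr_rank d1"
      using rank_d[OF cR d1R cd1] rc by linarith
    have "P H1" unfolding P_def pa pb
    proof (intro conjI H1G cd1 rc rd1, intro impI)
      assume d1c: "gr_mult G d1 c = gr_one G"
      have "d1 = gr_mult G d1 (gr_mult G c d)" using cd mult_one_right[OF d1R] by simp
      also have "\<dots> = d" using mult_assoc[OF d1R cR dR] d1c mult_one_left[OF dR] by simp
      finally have "d1 = d" .
      then show "a = c \<and> b = d1" using fin d1c by simp
    qed
    then have "m H \<le> m H1" by (rule Hmin)
    then have "gr_rank d \<le> gr_rank d1" unfolding m_def pa pb c_def[symmetric] d_def[symmetric] by simp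
    moreover have "gr_supp d1 \<subseteq> gr_supp d" unfolding d1_def supp_proj by auto
    ultimately have "gr_supp d1 = gr_supp d" using fd unfolding gr_rank_def
      by (intro card_seteq) auto
    then show ?thesis unfolding d1_def supp_proj by auto
  qed
  have cH2: "gr_supp c \<subseteq> H2"
  proof -
    define c2 where "c2 = gr_proj H2 c"
    have pb: "gr_proj H2 b = d" using proj_proj[OF H2H, of b] proj_id[OF dH2] d_def by simp
    have pa: "gr_proj H2 a = c2" using proj_proj[OF H2H, of a] c2_def c_def by simp
    have c2R: "c2 \<in> group_ring G" unfolding c2_def using cR proj_ring by auto
    have c2d: "gr_mult G c2 d = gr_one G"
      unfolding c2_def projR[OF H2G cR dH2, symmetric] cd by (rule proj_one[OF one2])
    have rc2: "2 \<le> gr_rank c2"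
      using rank_c[OF c2R dR c2d] rd by linarith
    have "P H2" unfolding P_def pa pb
    proof (intro conjI H2G c2d rc2 rd, intro impI)
      assume dc2: "gr_mult G d c2 = gr_one G"
      have "c = gr_mult G c (gr_mult G d c2)" using dc2 mult_one_right[OF cR] by simp
      also have "\<dots> = c2" using mult_assoc[OF cR dR c2R] cd mult_one_left[OF c2R] by simp
      finally have "c = c2" .
      then show "a = c2 \<and> b = d" using fin dc2 by simp
    qed
    then have "m H \<le> m H2" by (rule Hmin)
    then have "gr_rank c \<le> gr_rank c2" unfolding m_def pa pb c_def[symmetric] d_def[symmetric] by simp
    moreover have "gr_supp c2 \<subseteq> gr_supp c" unfolding c2_def supp_proj by auto
    ultimately have "gr_supp c2 = gr_supp c" using fc unfolding gr_rank_def
      by (intro card_seteq) auto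
    then show ?thesis unfolding c2_def supp_proj by auto
  qed
  have "H1 \<subseteq> H2" unfolding H1_def by (rule generate_subgroup_incl[OF cH2 H2G])
  moreover have "H2 \<subseteq> H1" unfolding H2_def by (rule generate_subgroup_incl[OF dH1 H1G])
  ultimately have H12: "H1 = H2" by blast
  have pa: "gr_proj H1 a = c" using proj_proj[OF H1H, of a] proj_id[OF cH1] c_def by simp
  have pb: "gr_proj H1 b = d" using proj_proj[OF H1H, of b] proj_id[OF dH1] d_def by simp
  show ?thesis
    by (rule exI[of _ H1]) (use H1G cd rc rd fin H12 pa pb in \<open>simp add: Let_def H1_def[symmetric] H2_def[symmetric]\<close>)
qed

end
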